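(* Let $\alpha\in\mathbb{R}$ and $0<\beta\le\frac14$. Suppose $F_2(\alpha,\beta)$ has Property A, $t\in\mathfrak{T}_1(F_1(\alpha,\beta)-F_1(\alpha,\beta))$, and $\Theta_\alpha(t)\ge0$ on $\mathbb{T}^2$. Then $t\in\mathfrak{U}_1(F_1(\alpha,\beta))$.
   Context: $\mathbb{T}=\mathbb{R}/\mathbb{Z}$, $e_j(x)=e^{2\pi i jx}$. $\mathfrak{T}_d$ is the algebra of trigonometric polynomials on $\mathbb{T}^d$; $\mathfrak{T}_d^+=\{t\in\mathfrak{T}_d:t\ge0\}$; for $F\subseteq\mathbb{Z}^d$, $\mathfrak{T}_d(F)=\{t\in\mathfrak{T}_d:\mathrm{freq}(t)\subseteq F\}$, $\mathfrak{T}_d^+(F)=\mathfrak{T}_d^+\cap\mathfrak{T}_d(F)$, $\mathfrak{S}_d(F)=\{|p|^2:p\in\mathfrak{T}_d(F)\}$, and $\mathfrak{U}_d(F)=\mathfrak{T}_d\cap\overline{\mathfrak{S}_d(F)}$ (closure in the sup norm on $C(\mathbb{T}^d)$). $F\subseteq\mathbb{Z}^d$ has Property A if $\mathfrak{U}_d(F)=\mathfrak{T}_d^+(F-F)$. For $\alpha\in\mathbb{R}$, $\theta_\alpha(j)$ is the smallest integer minimizing $|\theta_\alpha(j)-j\alpha|$, and $\Theta_\alpha(t)(x,y)=\sum_j\widehat t(j)e_j(x)e_{\theta_\alpha(j)}(y)$ for $t\in\mathfrak{T}_1$. $F_1(\alpha,\beta)=\{j\in\mathbb{Z}:|\theta_\alpha(j)-j\alpha|<\beta\}$,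 $F_2(\alpha,\beta)=\{(j,k)\in\mathbb{Z}^2:|k-j\alpha|<\beta\}$. *)

theory Defs
  imports Complex_Main "HOL-Library.Product_Plus"
begin

(* Trigonometric polynomials are represented by their (finitely supported)
   Fourier coefficient functions  c :: 'f => complex, where the frequency
   type 'f is int (d = 1) or int * int (d = 2).  Points of T^d are represented
   by real numbers / pairs of reals (all functions involved are 1-periodic). *)

definition ch1 :: "int \<Rightarrow> real \<Rightarrow> complex" where
  "ch1 j x = exp (2 * of_real pi * \<i> * of_real (of_int j * x))"

definition ch2 :: "int \<times> int \<Rightarrow> real \<times> real \<Rightarrow> complex" where
  "ch2 jk xy = exp (2 * of_real pi * \<i> *
      of_real (of_int (fst jk) * fst xy + of_int (snd jk) * snd xy))"

definition freq :: "('f \<Rightarrow> complex) \<Rightarrow> 'f set" where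
  "freq c = {j. c j \<noteq> 0}"

definition trig_eval :: "('f \<Rightarrow> 'p \<Rightarrow> complex) \<Rightarrow> ('f \<Rightarrow> complex) \<Rightarrow> 'p \<Rightarrow> complex" where
  "trig_eval ch c p = (\<Sum>j\<in>freq c. c j * ch j p)"

definition trigpolys :: "'f set \<Rightarrow> ('f \<Rightarrow> complex) set" where
  "trigpolys F = {c. finite (freq c) \<and> freq c \<subseteq> F}"

definition trig_nonneg :: "('f \<Rightarrow> 'p \<Rightarrow> complex) \<Rightarrow> ('f \<Rightarrow> complex) \<Rightarrow> bool" where
  "trig_nonneg ch c \<longleftrightarrow> (\<forall>p. Im (trig_eval ch c p) = 0 \<and> Re (trig_eval ch c p) \<ge> 0)"

definition trigpolys_pos :: "('f \<Rightarrow> 'p \<Rightarrow> complex) \<Rightarrow> 'f set \<Rightarrow> ('f \<Rightarrow> complex) set" where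
  "trigpolys_pos ch F = {c \<in> trigpolys F. trig_nonneg ch c}"

definition Uset :: "('f \<Rightarrow> 'p \<Rightarrow> complex) \<Rightarrow> 'f set \<Rightarrow> ('f \<Rightarrow> complex) set" where
  "Uset ch F = {c. finite (freq c) \<and>
     (\<forall>\<epsilon>>0. \<exists>q\<in>trigpolys F. \<forall>p. cmod (trig_eval ch c p - of_real ((cmod (trig_eval ch q p))\<^sup>2)) \<le> \<epsilon>)}"

definition diffset :: "'f::ab_group_add set \<Rightarrow> 'f set" where
  "diffset F = {a - b | a b. a \<in> F \<and> b \<in> F}"

definition propertyA :: "('f::ab_group_add \<Rightarrow> 'p \<Rightarrow> complex) \<Rightarrow> 'f set \<Rightarrow> bool" where
  "propertyA ch F \<longleftrightarrow> Uset ch F = trigpolys_pos ch (diffset F)"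

definition theta :: "real \<Rightarrow> int \<Rightarrow> int" where
  "theta \<alpha> j = (THE n::int. (\<forall>m::int. \<bar>of_int n - of_int j * \<alpha>\<bar> \<le> \<bar>of_int m - of_int j * \<alpha>\<bar>) \<and>
      (\<forall>m::int. \<bar>of_int m - of_int j * \<alpha>\<bar> \<le> \<bar>of_int n - of_int j * \<alpha>\<bar> \<longrightarrow> n \<le> m))"

definition Theta :: "real \<Rightarrow> (int \<Rightarrow> complex) \<Rightarrow> (int \<times> int \<Rightarrow> complex)" where
  "Theta \<alpha> t = (\<lambda>(j, k). if k = theta \<alpha> j then t j else 0)"

definition F1 :: "real \<Rightarrow> real \<Rightarrow> int set" where
  "F1 \<alpha> \<beta> = {j. \<bar>of_int (theta \<alpha> j) - of_int j * \<alpha>\<bar> < \<beta>}"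

definition F2 :: "real \<Rightarrow> real \<Rightarrow> (int \<times> int) set" where
  "F2 \<alpha> \<beta> = {(j, k). \<bar>of_int k - of_int j * \<alpha>\<bar> < \<beta>}"

end

theory Submission
  imports Defs
begin

lemma theta_eq:
  fixes x :: real and n :: int and j :: int
  assumes "\<bar>of_int n - of_int j * \<alpha>\<bar> < 1/2"
  shows "theta \<alpha> j = n"
proof -
  let ?x = "of_int j * \<alpha>"
  have key: "m = n" if "\<bar>of_int m - ?x\<bar> < 1/2" for m :: int
  proof (rule ccontr)
    assume "m \<noteq> n"
    hence "\<bar>m - n\<bar> \<ge> 1" by linarith
    hence "\<bar>of_int m - of_int n\<bar> \<ge> (1::real)"
      by (metis of_int_1_le_iff of_int_abs of_int_diff)
    thus False using that assms by linarith
  qed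
  have P: "(\<forall>m::int. \<bar>of_int n - ?x\<bar> \<le> \<bar>of_int m - ?x\<bar>) \<and>
      (\<forall>m::int. \<bar>of_int m - ?x\<bar> \<le> \<bar>of_int n - ?x\<bar> \<longrightarrow> n \<le> m)"
  proof (intro conjI allI impI)
    fix m :: int
    show "\<bar>of_int n - ?x\<bar> \<le> \<bar>of_int m - ?x\<bar>"
    proof (cases "\<bar>of_int m - ?x\<bar> < 1/2")
      case True then show ?thesis using key by simp
    next
      case False then show ?thesis using assms by linarith
    qed
  next
    fix m :: int
    assume "\<bar>of_int m - ?x\<bar> \<le> \<bar>of_int n - ?x\<bar>"
    hence "m = n" using key assms by linarith
    thus "n \<le> m" by simp
  qed
  show ?thesis unfolding theta_def
  proof (rule the_equality)
    show "(\<forall>m::int. \<bar>of_int n - ?x\<bar> \<le> \<bar>of_int m - ?x\<bar>) \<and>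
      (\<forall>m::int. \<bar>of_int m - ?x\<bar> \<le> \<bar>of_int n - ?x\<bar> \<longrightarrow> n \<le> m)" by (rule P)
  next
    fix n' :: int
    assume "(\<forall>m::int. \<bar>of_int n' - ?x\<bar> \<le> \<bar>of_int m - ?x\<bar>) \<and>
      (\<forall>m::int. \<bar>of_int m - ?x\<bar> \<le> \<bar>of_int n' - ?x\<bar> \<longrightarrow> n' \<le> m)"
    hence "\<bar>of_int n' - ?x\<bar> \<le> \<bar>of_int n - ?x\<bar>" by blast
    thus "n' = n" using key assms by linarith
  qed
qed

lemma ch2_0: "ch2 (j, k) (x, 0) = ch1 j x"
  by (simp add: ch1_def ch2_def)

theorem corollary1:
  fixes \<alpha> \<beta> :: real and t :: "int \<Rightarrow> complex"
  assumes "0 < \<beta>" and "\<beta> \<le> 1/4"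
    and "propertyA ch2 (F2 \<alpha> \<beta>)"
    and "t \<in> trigpolys (diffset (F1 \<alpha> \<beta>))"
    and "trig_nonneg ch2 (Theta \<alpha> t)"
  shows "t \<in> Uset ch1 (F1 \<alpha> \<beta>)"
proof -
  have tfin: "finite (freq t)" and tsub: "freq t \<subseteq> diffset (F1 \<alpha> \<beta>)"
    using assms(4) by (auto simp: trigpolys_def)
  define g where "g = (\<lambda>j::int. (j, theta \<alpha> j))"
  have ginj: "inj g" unfolding g_def by (auto intro: injI)
  have fTheta: "freq (Theta \<alpha> t) = g ` freq t"
    unfolding freq_def Theta_def g_def by (auto split: if_splits)
  have inF2: "g j \<in> diffset (F2 \<alpha> \<beta>)" if jt: "j \<in> freq t" for j
  proof -
    obtain a b where ab: "j = a - b" "a \<in> F1 \<alpha> \<beta>" "b \<in> F1 \<alpha> \<beta>"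
      using tsub jt unfolding diffset_def by blast
    have ha: "\<bar>of_int (theta \<alpha> a) - of_int a * \<alpha>\<bar> < \<beta>"
      and hb: "\<bar>of_int (theta \<alpha> b) - of_int b * \<alpha>\<bar> < \<beta>"
      using ab unfolding F1_def by auto
    have "\<bar>of_int (theta \<alpha> a - theta \<alpha> b) - of_int j * \<alpha>\<bar> < 1/2"
      using ha hb assms(2) unfolding ab(1) of_int_diff abs_less_iff by (simp add: algebra_simps)
    hence th: "theta \<alpha> j = theta \<alpha> a - theta \<alpha> b" by (rule theta_eq)
    have "(a, theta \<alpha> a) \<in> F2 \<alpha> \<beta>" "(b, theta \<alpha> b) \<in> F2 \<alpha> \<beta>"
      using ha hb unfolding F2_def by auto
    moreover have "g j = (a, theta \<alpha> a) - (b, theta \<alpha> b)"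
      using th ab(1) by (simp add: g_def)
    ultimately show ?thesis unfolding diffset_def by blast
  qed
  have "Theta \<alpha> t \<in> trigpolys_pos ch2 (diffset (F2 \<alpha> \<beta>))"
    unfolding trigpolys_pos_def trigpolys_def using fTheta tfin inF2 assms(5) by auto
  hence TU: "Theta \<alpha> t \<in> Uset ch2 (F2 \<alpha> \<beta>)"
    using assms(3) unfolding propertyA_def by simp
  have evalT: "trig_eval ch2 (Theta \<alpha> t) (x, 0) = trig_eval ch1 t x" for x
  proof -
    have "trig_eval ch2 (Theta \<alpha> t) (x, 0) = (\<Sum>jk\<in>g ` freq t. Theta \<alpha> t jk * ch2 jk (x, 0))"
      unfolding trig_eval_def fTheta ..
    also have "\<dots> = (\<Sum>j\<in>freq t. Theta \<alpha> t (g j) * ch2 (g j) (x, 0))"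
      by (rule sum.reindex_cong[OF inj_on_subset[OF ginj]]) auto
    also have "\<dots> = (\<Sum>j\<in>freq t. t j * ch1 j x)"
      by (simp add: g_def Theta_def ch2_0)
    finally show ?thesis unfolding trig_eval_def .
  qed
  show ?thesis unfolding Uset_def
  proof (intro CollectI conjI allI impI tfin)
    fix \<epsilon> :: real assume "\<epsilon> > 0"
    then obtain q where q: "q \<in> trigpolys (F2 \<alpha> \<beta>)"
      and qb: "\<And>p. cmod (trig_eval ch2 (Theta \<alpha> t) p - of_real ((cmod (trig_eval ch2 q p))\<^sup>2)) \<le> \<epsilon>"
      using TU unfolding Uset_def by blast
    have qfin: "finite (freq q)" and qsub: "freq q \<subseteq> F2 \<alpha> \<beta>"
      using q by (auto simp: trigpolys_def)
    have qth: "k = theta \<alpha> j" if "(j, k) \<in> freq q" for j k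
    proof -
      have "\<bar>of_int k - of_int j * \<alpha>\<bar> < \<beta>" using qsub that unfolding F2_def by auto
      hence "\<bar>of_int k - of_int j * \<alpha>\<bar> < 1/2" using assms(2) by linarith
      thus ?thesis by (rule theta_eq[symmetric])
    qed
    define p where "p = (\<lambda>j. q (g j))"
    have fp: "freq p = fst ` freq q"
    proof
      show "freq p \<subseteq> fst ` freq q"
        unfolding freq_def p_def g_def by (auto intro: image_eqI[where x="(_, _)"])
      show "fst ` freq q \<subseteq> freq p"
        using qth unfolding freq_def p_def g_def by force
    qed
    have fstinj: "inj_on fst (freq q)"
      using qth by (auto intro!: inj_onI) metis
    have pF1: "p \<in> trigpolys (F1 \<alpha> \<beta>)"
    proof -
      have "fst jk \<in> F1 \<alpha> \<beta>" if "jk \<in> freq q" for jk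
      proof -
        obtain j k where jk: "jk = (j, k)" by (cases jk)
        have "\<bar>of_int k - of_int j * \<alpha>\<bar> < \<beta>" using qsub that jk unfolding F2_def by auto
        moreover have "k = theta \<alpha> j" using qth that jk by simp
        ultimately show ?thesis using jk unfolding F1_def by simp
      qed
      thus ?thesis unfolding trigpolys_def using fp qfin by auto
    qed
    have evalq: "trig_eval ch2 q (x, 0) = trig_eval ch1 p x" for x
    proof -
      have "trig_eval ch1 p x = (\<Sum>j\<in>fst ` freq q. p j * ch1 j x)"
        unfolding trig_eval_def fp ..
      also have "\<dots> = (\<Sum>jk\<in>freq q. p (fst jk) * ch1 (fst jk) x)"
        by (rule sum.reindex_cong[OF fstinj]) auto
      also have "\<dots> = (\<Sum>jk\<in>freq q. q jk * ch2 jk (x, 0))"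
      proof (rule sum.cong[OF refl])
        fix jk assume "jk \<in> freq q"
        then obtain j k where jk: "jk = (j, k)" "k = theta \<alpha> j"
          using qth by (cases jk) auto
        show "p (fst jk) * ch1 (fst jk) x = q jk * ch2 jk (x, 0)"
          using jk by (simp add: p_def g_def ch2_0)
      qed
      finally show ?thesis unfolding trig_eval_def by simp
    qed
    show "\<exists>p\<in>trigpolys (F1 \<alpha> \<beta>). \<forall>x. cmod (trig_eval ch1 t x - of_real ((cmod (trig_eval ch1 p x))\<^sup>2)) \<le> \<epsilon>"
    proof (intro bexI[OF _ pF1] allI)
      fix x
      show "cmod (trig_eval ch1 t x - of_real ((cmod (trig_eval ch1 p x))\<^sup>2)) \<le> \<epsilon>"
        using qb[of "(x, 0)"] by (simp add: evalT evalq)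
    qed
  qed
qed

end
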